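(* Let $H\geq 2$ be an integer and $C>0$ a real number, let $A=\{\frac{b}{a}: a,b\in\mathbb{Z},\ 0<a\le H,\ |\frac ba|\le C\}$, and set $\varepsilon:=\frac{1}{H(H-1)}$. Let $f(x)=c_1x^{d_1}+\cdots+c_tx^{d_t}$ with $t\ge1$, integers $0\le d_1<\cdots<d_t$, and $c_1,\dots,c_t\in A\setminus\{0\}$, and let $\beta$ be a real number with $\beta\ge\frac{2C}{\varepsilon}+1$. Write $c_t=\frac{b}{a}$ with $a,b\in\mathbb{Z}$, $a>0$, $\gcd(a,b)=1$. For $i=1,2,\dots,H$ let $$I_i:=\left(\frac{f(\beta)}{\beta^{d_t}}\,i-\frac{\varepsilon}{2}\,i,\ \frac{f(\beta)}{\beta^{d_t}}\,i+\frac{\varepsilon}{2}\,i\right).$$ Then $I_a\cap\mathbb{Z}=\{b\}$, and whenever $a_0\in\{1,\dots,H\}$ and $b_0\in\mathbb{Z}$ satisfy $b_0\in I_{a_0}$, we have $\frac{b_0}{a_0}=\frac{b}{a}$.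
   Context: Here $f(\beta)$ is real since all coefficients are rational and $\beta$ is real. *)

theory Defs
  imports Complex_Main
begin

definition coeff_set :: "int \<Rightarrow> real \<Rightarrow> real set" where
  "coeff_set H C = {real_of_int b / real_of_int a | a b :: int.
      0 < a \<and> a \<le> H \<and> \<bar>real_of_int b / real_of_int a\<bar> \<le> C}"

definition interval_I :: "real \<Rightarrow> real \<Rightarrow> int \<Rightarrow> real set" where
  "interval_I r eps i = {r * real_of_int i - eps / 2 * real_of_int i <..< r * real_of_int i + eps / 2 * real_of_int i}"

end

theory Submission
  imports Defs
begin

lemma geo: fixes q::real assumes "0<q" "q<1" shows "(\<Sum>i=1..<t. q^(t-i)) < q/(1-q)"
proof -
  have "(\<Sum>i=1..<t. q^(t-i)) = (\<Sum>k=1..<t. q^k)"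
    by (rule sum.reindex_bij_witness[where i="\<lambda>k. t-k" and j="\<lambda>i. t-i"]) auto
  also have "\<dots> = q * (\<Sum>k<t-1. q^k)"
    proof -
      have "(\<Sum>k=1..<t. q^k) = (\<Sum>k<t-1. q^(Suc k))"
        by (rule sum.reindex_bij_witness[where i="Suc" and j="\<lambda>i. i - 1"]) auto
      thus ?thesis by (simp add: sum_distrib_left)
    qed
  also have "(\<Sum>k<t-1. q^k) = (1 - q^(t-1))/(1-q)"
    using sum_gp_strict[of q "t-1"] assms by simp
  also have "q * ((1 - q^(t-1))/(1-q)) < q/(1-q)" using assms by (simp add: field_simps)
  finally show ?thesis .
qed

lemma dgap:
  fixes d :: "nat \<Rightarrow> nat"
  assumes hd: "\<And>i j. 1 \<le> i \<Longrightarrow> i < j \<Longrightarrow> j \<le> t \<Longrightarrow> d i < d j"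
    and "1 \<le> i" "i \<le> j" "j \<le> t"
  shows "d i + (j - i) \<le> d j"
  using assms(3,4)
proof (induction j rule: dec_induct)
  case base then show ?case by simp
next
  case (step n)
  have "d n < d (Suc n)" using hd[of n "Suc n"] assms(2) step by simp
  with step show ?case by (simp add: Suc_diff_le)
qed

theorem lemma2p7:
  fixes H :: int and C :: real and t :: nat
    and c :: "nat \<Rightarrow> real" and d :: "nat \<Rightarrow> nat" and \<beta> :: real
    and a b :: int
  assumes hH: "H \<ge> 2"
    and hC: "C > 0"
    and ht: "t \<ge> 1"
    and hd: "\<And>i j. 1 \<le> i \<Longrightarrow> i < j \<Longrightarrow> j \<le> t \<Longrightarrow> d i < d j"
    and hc: "\<And>i. 1 \<le> i \<Longrightarrow> i \<le> t \<Longrightarrow> c i \<in> coeff_set H C - {0}"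
    and h\<beta>: "\<beta> \<ge> 2 * C / (1 / (real_of_int H * (real_of_int H - 1))) + 1"
    and hab: "a > 0" "coprime a b" "c t = real_of_int b / real_of_int a"
  shows "{z :: int. real_of_int z \<in> interval_I ((\<Sum>i=1..t. c i * \<beta> ^ d i) / \<beta> ^ d t)
                         (1 / (real_of_int H * (real_of_int H - 1))) a} = {b}
         \<and> (\<forall>a0 b0 :: int. 1 \<le> a0 \<and> a0 \<le> H \<and>
              real_of_int b0 \<in> interval_I ((\<Sum>i=1..t. c i * \<beta> ^ d i) / \<beta> ^ d t)
                         (1 / (real_of_int H * (real_of_int H - 1))) a0
              \<longrightarrow> real_of_int b0 / real_of_int a0 = real_of_int b / real_of_int a)"
proof -
  define eps where "eps = 1 / (real_of_int H * (real_of_int H - 1))"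
  define r where "r = (\<Sum>i=1..t. c i * \<beta> ^ d i) / \<beta> ^ d t"
  define N where "N = real_of_int H * (real_of_int H - 1)"
  have HR: "real_of_int H \<ge> 2" using hH by simp
  have "2 * 1 \<le> real_of_int H * (real_of_int H - 1)" using HR by (intro mult_mono) auto
  hence Npos: "N \<ge> 2" unfolding N_def by simp
  have "real_of_int H * 1 \<le> real_of_int H * (real_of_int H - 1)" using HR by (intro mult_left_mono) auto
  hence NH: "N \<ge> real_of_int H" unfolding N_def by simp
  have epsN: "eps = 1 / N" unfolding eps_def N_def by simp
  have epspos: "eps > 0" using Npos epsN by simp
  have hb: "\<beta> \<ge> 2 * C * N + 1" using h\<beta> unfolding N_def by simp
  have "C * N > 0" using hC Npos by simp
  hence bgt: "\<beta> > 1" using hb by linarith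
  define q where "q = 1 / \<beta>"
  have q0: "0 < q" "q < 1" using bgt unfolding q_def by auto
  have q1: "q / (1 - q) = 1 / (\<beta> - 1)" unfolding q_def using bgt by (simp add: field_simps)
  have cb: "\<bar>c i\<bar> \<le> C" if "1 \<le> i" "i \<le> t" for i
    using hc[OF that] unfolding coeff_set_def by auto
  have split: "(\<Sum>i=1..t. c i * \<beta> ^ d i) = (\<Sum>i=1..<t. c i * \<beta> ^ d i) + c t * \<beta> ^ d t"
  proof -
    have "{1..t} = insert t {1..<t}" using ht by auto
    thus ?thesis by simp
  qed
  have bpos: "\<beta> ^ d t > 0" using bgt by simp
  have rdiff: "r - c t = (\<Sum>i=1..<t. c i * \<beta> ^ d i / \<beta> ^ d t)"
    unfolding r_def split using bpos bgt by (simp add: add_divide_distrib sum_divide_distrib)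
  have trm: "\<bar>c i * \<beta> ^ d i / \<beta> ^ d t\<bar> \<le> C * q ^ (t - i)" if "i \<in> {1..<t}" for i
  proof -
    have g: "d i + (t - i) \<le> d t" using dgap[where d=d and t=t and i=i and j=t, OF hd] that by auto
    have "\<beta> ^ d i / \<beta> ^ d t = q ^ (d t - d i)"
      unfolding q_def using bgt g by (simp add: power_diff power_one_over)
    also have "\<dots> \<le> q ^ (t - i)" using q0 g by (intro power_decreasing) auto
    finally have e: "\<beta> ^ d i / \<beta> ^ d t \<le> q ^ (t - i)" .
    have "\<bar>c i * \<beta> ^ d i / \<beta> ^ d t\<bar> = \<bar>c i\<bar> * (\<beta> ^ d i / \<beta> ^ d t)"
      using bgt by (simp add: abs_mult)
    also have "\<dots> \<le> C * q ^ (t - i)"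
      using cb[of i] that e bgt by (intro mult_mono) auto
    finally show ?thesis .
  qed
  have "\<bar>r - c t\<bar> \<le> (\<Sum>i=1..<t. C * q ^ (t - i))"
    unfolding rdiff by (rule order_trans[OF sum_abs sum_mono]) (use trm in auto)
  also have "\<dots> = C * (\<Sum>i=1..<t. q ^ (t - i))" by (simp add: sum_distrib_left)
  also have "\<dots> < C * (1 / (\<beta> - 1))" using geo[OF q0, of t] q1 hC by (metis mult_strict_left_mono)
  also have "\<dots> \<le> eps / 2"
  proof -
    have "2 * C * N \<le> \<beta> - 1" using hb by simp
    hence "C / (\<beta> - 1) \<le> 1 / (2 * N)" using bgt Npos hC by (simp add: field_simps)
    thus ?thesis using epsN by simp
  qed
  finally have key: "\<bar>r - c t\<bar> < eps / 2" .
  obtain a' b' :: int where a': "0 < a'" "a' \<le> H" "c t = real_of_int b' / real_of_int a'"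
    using hc[of t] ht unfolding coeff_set_def by auto
  have "real_of_int b * real_of_int a' = real_of_int b' * real_of_int a"
    using a' hab by (simp add: field_simps)
  hence "b * a' = b' * a" by (metis of_int_eq_iff of_int_mult)
  hence "a dvd b * a'" by simp
  hence "a dvd a'" using hab(2) by (simp add: coprime_dvd_mult_right_iff)
  hence aH: "a \<le> H" using a' zdvd_imp_le by fastforce
  have aR: "real_of_int a > 0" "real_of_int a \<le> real_of_int H" using hab aH by auto
  have mem: "real_of_int z \<in> interval_I r eps i \<longleftrightarrow> \<bar>real_of_int z / real_of_int i - r\<bar> < eps / 2"
    if "i > 0" for z i
  proof -
    have ip: "real_of_int i > 0" using that by simp
    have "real_of_int z \<in> interval_I r eps i \<longleftrightarrow> \<bar>real_of_int z - r * real_of_int i\<bar> < eps / 2 * real_of_int i"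
      unfolding interval_I_def greaterThanLessThan_iff abs_less_iff by linarith
    also have "\<dots> \<longleftrightarrow> \<bar>real_of_int z / real_of_int i - r\<bar> * real_of_int i < eps / 2 * real_of_int i"
    proof -
      have "\<bar>real_of_int z - r * real_of_int i\<bar> = \<bar>real_of_int z / real_of_int i - r\<bar> * real_of_int i"
        using ip by (simp add: abs_mult[symmetric] field_simps)
      thus ?thesis by simp
    qed
    also have "\<dots> \<longleftrightarrow> \<bar>real_of_int z / real_of_int i - r\<bar> < eps / 2" using ip by simp
    finally show ?thesis .
  qed
  have P1: "{z :: int. real_of_int z \<in> interval_I r eps a} = {b}"
  proof (intro set_eqI iffI)
    fix z assume "z \<in> {z :: int. real_of_int z \<in> interval_I r eps a}"
    hence zi: "\<bar>real_of_int z / real_of_int a - r\<bar> < eps / 2" using mem hab by auto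
    have "\<bar>real_of_int z / real_of_int a - real_of_int b / real_of_int a\<bar> < eps"
      using zi key hab(3) by linarith
    hence "\<bar>real_of_int z - real_of_int b\<bar> / real_of_int a < eps"
      using aR by (simp add: diff_divide_distrib[symmetric])
    hence "\<bar>real_of_int z - real_of_int b\<bar> < eps * real_of_int a"
      using aR by (simp add: field_simps)
    also have "\<dots> \<le> eps * N" using aR NH epspos by simp
    also have "\<dots> = 1" using epsN Npos by simp
    finally have "\<bar>z - b\<bar> < 1" by linarith
    thus "z \<in> {b}" by simp
  next
    fix z assume "z \<in> {b}"
    thus "z \<in> {z :: int. real_of_int z \<in> interval_I r eps a}"
      using mem[of a b] hab key by (auto simp: abs_minus_commute)
  qed
  have P2: "real_of_int b0 / real_of_int a0 = real_of_int b / real_of_int a"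
    if "1 \<le> a0" "a0 \<le> H" "real_of_int b0 \<in> interval_I r eps a0" for a0 b0
  proof (rule ccontr)
    assume ne: "real_of_int b0 / real_of_int a0 \<noteq> real_of_int b / real_of_int a"
    have a0R: "real_of_int a0 > 0" using that by simp
    have "\<bar>real_of_int b0 / real_of_int a0 - r\<bar> < eps / 2" using mem that by auto
    hence lt: "\<bar>real_of_int b0 / real_of_int a0 - real_of_int b / real_of_int a\<bar> < eps"
      using key hab(3) by linarith
    have eqd: "real_of_int b0 / real_of_int a0 - real_of_int b / real_of_int a
         = real_of_int (b0 * a - b * a0) / (real_of_int a0 * real_of_int a)"
      using a0R aR by (simp add: field_simps)
    have nz: "b0 * a - b * a0 \<noteq> 0"
    proof
      assume "b0 * a - b * a0 = 0"
      hence "b0 * a = b * a0" by simp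
      hence "real_of_int (b0 * a) = real_of_int (b * a0)" by simp
      hence "real_of_int b0 * real_of_int a = real_of_int b * real_of_int a0" by simp
      thus False using ne a0R aR by (simp add: field_simps)
    qed
    have bound: "a0 * a \<le> \<bar>b0 * a - b * a0\<bar> * (H * (H - 1))"
    proof (cases "a = a0")
      case True
      have "\<bar>b0 * a - b * a0\<bar> = a * \<bar>b0 - b\<bar>" proof -
        have "b0 * a - b * a0 = a * (b0 - b)" using True by (simp add: algebra_simps)
        thus ?thesis using hab by (simp add: abs_mult)
      qed
      moreover have "\<bar>b0 - b\<bar> \<ge> 1" using nz True by (auto simp: algebra_simps)
      moreover have "H * 1 \<le> H * (H - 1)" using hH by (intro mult_left_mono) auto
      moreover have "a * 1 \<le> a * \<bar>b0 - b\<bar>" using hab calculation(2) by (intro mult_left_mono) auto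
      ultimately have "a * H \<le> \<bar>b0 * a - b * a0\<bar> * (H * (H - 1))"
        using hab hH by (intro mult_mono) auto
      moreover have "a0 * a \<le> a * H" using that hab by (simp add: mult.commute)
      ultimately show ?thesis by linarith
    next
      case False
      have "a0 * a \<le> H * (H - 1)"
      proof (cases "a < a0")
        case True
        hence "a \<le> H - 1" using that by simp
        thus ?thesis using that hab by (intro mult_mono) auto
      next
        case False
        hence "a0 \<le> H - 1" using \<open>a \<noteq> a0\<close> aH by simp
        hence "a0 * a \<le> (H - 1) * H" using that hab aH by (intro mult_mono) auto
        thus ?thesis by (simp add: mult.commute)
      qed
      moreover have "\<bar>b0 * a - b * a0\<bar> \<ge> 1" using nz by simp
      moreover have "H * (H - 1) \<ge> 0" using hH by simp
      moreover have "1 * (H * (H - 1)) \<le> \<bar>b0 * a - b * a0\<bar> * (H * (H - 1))"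
        using calculation(2,3) by (intro mult_right_mono) auto
      ultimately show ?thesis by linarith
    qed
    hence "real_of_int (a0 * a) \<le> real_of_int (\<bar>b0 * a - b * a0\<bar> * (H * (H - 1)))"
      by (simp only: of_int_le_iff)
    hence "real_of_int a0 * real_of_int a \<le> real_of_int \<bar>b0 * a - b * a0\<bar> * N"
      unfolding N_def by simp
    hence "1 / N \<le> real_of_int \<bar>b0 * a - b * a0\<bar> / (real_of_int a0 * real_of_int a)"
      using a0R aR Npos by (simp add: field_simps)
    also have "\<dots> = \<bar>real_of_int b0 / real_of_int a0 - real_of_int b / real_of_int a\<bar>"
      unfolding eqd using a0R aR by simp
    finally show False using lt epsN by simp
  qed
  show ?thesis using P1 P2 unfolding r_def eps_def by blast
qed

end
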